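(* Let $\mathcal{G}=(G,\odot,\leq)$ be a real continuous Alo-group with $G$ an open interval of $\mathbb{R}$, and let $\tilde A=([a_{ij}^-,a_{ij}^+])$ be an $n\times n$ $[\mathcal{G}]$-reciprocal IPCM with associated matrices $L=(l_{ij})$, $R=(r_{ij})$. The following are equivalent: (1) $\tilde A$ is Liu's $[\mathcal{G}]$-consistent, i.e. $l_{ik}=l_{ij}\odot l_{jk}$ and $r_{ik}=r_{ij}\odot r_{jk}$ for all $i,j,k\in\{1,\dots,n\}$; (2) $l_{ik}=l_{ij}\odot l_{jk}$ and $r_{ik}=r_{ij}\odot r_{jk}$ for all $i<j<k$; (3) $\tilde a_{ik}=\tilde a_{ij}\odot_{[G]}\tilde a_{jk}$ for all $i<j<k$.
   Context: An Alo-group $(G,\odot,\leq)$ is an Abelian group with identity $e$ and a weak order $\leq$ such that $a\leq b\Rightarrow a\odot c\leq b\odot c$; real means $G\subseteq\mathbb{R}$ with usual order, continuous means $\odot$ is continuous. $[G]=\{[a^-,a^+]: a^-,a^+\in G,\ a^-\leq a^+\}$; $\tilde a^{(-1)}=[(a^+)^{(-1)},(a^-)^{(-1)}]$; $\tilde a\odot_{[G]}\tilde b=\{a\odot b: a\in\tilde a,b\in\tilde b\}$. An IPCM is an $n\times n$ matrix with entries in $[G]$; $[\mathcal{G}]$-reciprocal means $\tilde a_{ji}=\tilde a_{ij}^{(-1)}$ for all $i,j$. $L,R$ are defined by $l_{ij}=a_{ij}^-$ if $i<j$, $e$ if $i=j$, $a_{ij}^+$ if $i>j$; and $r_{ij}=a_{ij}^+$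 if $i<j$, $e$ if $i=j$, $a_{ij}^-$ if $i>j$. *)

theory Defs
  imports "HOL-Analysis.Analysis"
begin

definition alo_group :: "real set \<Rightarrow> (real \<Rightarrow> real \<Rightarrow> real) \<Rightarrow> real \<Rightarrow> bool" where
  "alo_group G op e \<longleftrightarrow>
     (\<forall>a\<in>G. \<forall>b\<in>G. op a b \<in> G) \<and>
     (\<forall>a\<in>G. \<forall>b\<in>G. \<forall>c\<in>G. op (op a b) c = op a (op b c)) \<and>
     (\<forall>a\<in>G. \<forall>b\<in>G. op a b = op b a) \<and>
     e \<in> G \<and> (\<forall>a\<in>G. op a e = a) \<and>
     (\<forall>a\<in>G. \<exists>b\<in>G. op a b = e) \<and>
     (\<forall>a\<in>G. \<forall>b\<in>G. \<forall>c\<in>G. a \<le> b \<longrightarrow> op a c \<le> op b c)"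

definition cont_alo_open_interval :: "real set \<Rightarrow> (real \<Rightarrow> real \<Rightarrow> real) \<Rightarrow> real \<Rightarrow> bool" where
  "cont_alo_open_interval G op e \<longleftrightarrow>
     alo_group G op e \<and> is_interval G \<and> open G \<and> G \<noteq> {} \<and>
     continuous_on (G \<times> G) (\<lambda>(x, y). op x y)"

definition ginv :: "real set \<Rightarrow> (real \<Rightarrow> real \<Rightarrow> real) \<Rightarrow> real \<Rightarrow> real \<Rightarrow> real" where
  "ginv G op e a = (THE b. b \<in> G \<and> op a b = e)"

text \<open>An interval [a^-, a^+] in [G] is represented by the pair (a^-, a^+).\<close>
definition in_IG :: "real set \<Rightarrow> real \<times> real \<Rightarrow> bool" where
  "in_IG G p \<longleftrightarrow> fst p \<in> G \<and> snd p \<in> G \<and> fst p \<le> snd p"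

definition ginv_I :: "real set \<Rightarrow> (real \<Rightarrow> real \<Rightarrow> real) \<Rightarrow> real \<Rightarrow> real \<times> real \<Rightarrow> real \<times> real" where
  "ginv_I G op e p = (ginv G op e (snd p), ginv G op e (fst p))"

definition op_I :: "(real \<Rightarrow> real \<Rightarrow> real) \<Rightarrow> real \<times> real \<Rightarrow> real \<times> real \<Rightarrow> real set" where
  "op_I op p q = {op a b | a b. a \<in> {fst p..snd p} \<and> b \<in> {fst q..snd q}}"

definition IPCM :: "real set \<Rightarrow> nat \<Rightarrow> (nat \<Rightarrow> nat \<Rightarrow> real \<times> real) \<Rightarrow> bool" where
  "IPCM G n A \<longleftrightarrow> (\<forall>i\<in>{1..n}. \<forall>j\<in>{1..n}. in_IG G (A i j))"

definition G_reciprocal :: "real set \<Rightarrow> (real \<Rightarrow> real \<Rightarrow> real) \<Rightarrow> real \<Rightarrow> nat \<Rightarrow> (nat \<Rightarrow> nat \<Rightarrow> real \<times> real) \<Rightarrow> bool" where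
  "G_reciprocal G op e n A \<longleftrightarrow>
     (\<forall>i\<in>{1..n}. \<forall>j\<in>{1..n}. A j i = ginv_I G op e (A i j))"

definition Lmat :: "real \<Rightarrow> (nat \<Rightarrow> nat \<Rightarrow> real \<times> real) \<Rightarrow> nat \<Rightarrow> nat \<Rightarrow> real" where
  "Lmat e A i j = (if i < j then fst (A i j) else if i = j then e else snd (A i j))"

definition Rmat :: "real \<Rightarrow> (nat \<Rightarrow> nat \<Rightarrow> real \<times> real) \<Rightarrow> nat \<Rightarrow> nat \<Rightarrow> real" where
  "Rmat e A i j = (if i < j then snd (A i j) else if i = j then e else fst (A i j))"

definition liu_consistent :: "(real \<Rightarrow> real \<Rightarrow> real) \<Rightarrow> real \<Rightarrow> nat \<Rightarrow> (nat \<Rightarrow> nat \<Rightarrow> real \<times> real) \<Rightarrow> bool" where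
  "liu_consistent op e n A \<longleftrightarrow>
     (\<forall>i\<in>{1..n}. \<forall>j\<in>{1..n}. \<forall>k\<in>{1..n}.
        Lmat e A i k = op (Lmat e A i j) (Lmat e A j k) \<and>
        Rmat e A i k = op (Rmat e A i j) (Rmat e A j k))"

end

theory Submission
  imports Defs
begin

lemma alo_facts:
  assumes "alo_group G op e"
  shows "\<And>a b. a\<in>G \<Longrightarrow> b\<in>G \<Longrightarrow> op a b \<in> G"
    and "\<And>a b c. a\<in>G \<Longrightarrow> b\<in>G \<Longrightarrow> c\<in>G \<Longrightarrow> op (op a b) c = op a (op b c)"
    and "\<And>a b. a\<in>G \<Longrightarrow> b\<in>G \<Longrightarrow> op a b = op b a"
    and "e \<in> G" and "\<And>a. a\<in>G \<Longrightarrow> op a e = a" and "\<And>a. a\<in>G \<Longrightarrow> op e a = a"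
    and "\<And>a b c. a\<in>G \<Longrightarrow> b\<in>G \<Longrightarrow> c\<in>G \<Longrightarrow> a \<le> b \<Longrightarrow> op a c \<le> op b c"
    and "\<And>a b c. a\<in>G \<Longrightarrow> b\<in>G \<Longrightarrow> c\<in>G \<Longrightarrow> a \<le> b \<Longrightarrow> op c a \<le> op c b"
proof -
  note d = assms[unfolded alo_group_def]
  show "\<And>a b. a\<in>G \<Longrightarrow> b\<in>G \<Longrightarrow> op a b \<in> G" using d by blast
  show "\<And>a b c. a\<in>G \<Longrightarrow> b\<in>G \<Longrightarrow> c\<in>G \<Longrightarrow> op (op a b) c = op a (op b c)" using d by blast
  show cm: "\<And>a b. a\<in>G \<Longrightarrow> b\<in>G \<Longrightarrow> op a b = op b a" using d by blast
  show "e \<in> G" using d by blast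
  show "\<And>a. a\<in>G \<Longrightarrow> op a e = a" using d by blast
  show "\<And>a. a\<in>G \<Longrightarrow> op e a = a"
  proof -
    fix a assume "a \<in> G" then show "op e a = a" using d cm[of e a] by auto
  qed
  show mo: "\<And>a b c. a\<in>G \<Longrightarrow> b\<in>G \<Longrightarrow> c\<in>G \<Longrightarrow> a \<le> b \<Longrightarrow> op a c \<le> op b c" using d by blast
  show "\<And>a b c. a\<in>G \<Longrightarrow> b\<in>G \<Longrightarrow> c\<in>G \<Longrightarrow> a \<le> b \<Longrightarrow> op c a \<le> op c b"
  proof -
    fix a b c assume h: "a\<in>G" "b\<in>G" "c\<in>G" "a \<le> b"
    then show "op c a \<le> op c b" using mo[OF h] cm[of c a] cm[of c b] by simp
  qed
qed

lemma ginv_facts: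
  assumes "alo_group G op e" "a \<in> G"
  shows "ginv G op e a \<in> G \<and> op a (ginv G op e a) = e"
proof -
  note f = alo_facts[OF assms(1)]
  obtain b where b: "b \<in> G" "op a b = e" using assms unfolding alo_group_def by blast
  have u: "b' = b" if "b' \<in> G" "op a b' = e" for b'
  proof -
    have "b' = op e b'" using f(6) that by simp
    also have "\<dots> = op (op b a) b'" using b f(3)[of b a] assms by simp
    also have "\<dots> = op b (op a b')" using f(2)[of b a b'] b that assms by simp
    also have "\<dots> = b" using that f(5) b by simp
    finally show ?thesis .
  qed
  have "ginv G op e a = b" unfolding ginv_def
    by (rule the_equality) (use b u in blast)+
  then show ?thesis using b by simp
qed

lemma ginv_unique:
  assumes "alo_group G op e" "a \<in> G" "b \<in> G" "op a b = e"
  shows "ginv G op e a = b"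
proof -
  note f = alo_facts[OF assms(1)]
  have u: "b' = b" if "b' \<in> G" "op a b' = e" for b'
  proof -
    have "b' = op e b'" using f(6) that by simp
    also have "\<dots> = op (op b a) b'" using assms f(3)[of b a] by simp
    also have "\<dots> = op b (op a b')" using f(2)[of b a b'] assms that by simp
    also have "\<dots> = b" using that f(5) assms by simp
    finally show ?thesis .
  qed
  have "ginv G op e a \<in> G" "op a (ginv G op e a) = e" using ginv_facts[OF assms(1,2)] by auto
  then show ?thesis by (rule u)
qed

lemma trans_ext:
  assumes ag: "alo_group G op e"
    and fG: "\<And>i j. i \<in> S \<Longrightarrow> j \<in> S \<Longrightarrow> f i j \<in> G"
    and fe: "\<And>i. i \<in> S \<Longrightarrow> f i i = e"
    and finv: "\<And>i j. i \<in> S \<Longrightarrow> j \<in> S \<Longrightarrow> f j i = ginv G op e (f i j)"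
    and tr: "\<And>i j k. i \<in> S \<Longrightarrow> j \<in> S \<Longrightarrow> k \<in> S \<Longrightarrow> i < j \<Longrightarrow> j < (k::nat) \<Longrightarrow> f i k = op (f i j) (f j k)"
    and S: "i \<in> S" "j \<in> S" "k \<in> S"
  shows "f i k = op (f i j) (f j k)"
proof -
  note g = alo_facts[OF ag]
  have inv1: "op (f i j) (f j i) = e" if "i \<in> S" "j \<in> S" for i j
    using ginv_facts[OF ag fG[OF that]] finv[OF that] by simp
  have inv2: "op (f j i) (f i j) = e" if "i \<in> S" "j \<in> S" for i j
    using inv1[OF that] g(3)[OF fG[OF that(2,1)] fG[OF that]] by simp
  have sw12: "f j k = op (f j i) (f i k)"
    if h: "f i k = op (f i j) (f j k)" "i \<in> S" "j \<in> S" "k \<in> S" for i j k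
  proof -
    have "op (f j i) (f i k) = op (f j i) (op (f i j) (f j k))" using h(1) by simp
    also have "\<dots> = op (op (f j i) (f i j)) (f j k)"
      using g(2)[OF fG[OF h(3,2)] fG[OF h(2,3)] fG[OF h(3,4)]] by simp
    also have "\<dots> = f j k" using inv2[OF h(2,3)] g(6)[OF fG[OF h(3,4)]] by simp
    finally show ?thesis by simp
  qed
  have sw13: "f k i = op (f k j) (f j i)"
    if h: "f i k = op (f i j) (f j k)" "i \<in> S" "j \<in> S" "k \<in> S" for i j k
  proof -
    have G1: "f i j \<in> G" "f j k \<in> G" "f k j \<in> G" "f j i \<in> G"
      using fG h by auto
    have G2: "op (f k j) (f j i) \<in> G" using g(1) G1 by auto
    have "op (f i k) (op (f k j) (f j i)) = op (op (f i j) (f j k)) (op (f k j) (f j i))"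
      using h(1) by simp
    also have "\<dots> = op (f i j) (op (f j k) (op (f k j) (f j i)))"
      using g(2)[OF G1(1) G1(2) G2] by simp
    also have "op (f j k) (op (f k j) (f j i)) = op (op (f j k) (f k j)) (f j i)"
      using g(2)[OF G1(2) G1(3) G1(4)] by simp
    also have "\<dots> = f j i" using inv1[OF h(3,4)] g(6)[OF G1(4)] by simp
    also have "op (f i j) (f j i) = e" using inv1[OF h(2,3)] .
    finally have "ginv G op e (f i k) = op (f k j) (f j i)"
      using ginv_unique[OF ag fG[OF h(2,4)] G2] by simp
    then show ?thesis using finv[OF h(2,4)] by simp
  qed
  have P: "f i k = op (f i j) (f j k)" if "i \<noteq> j" "j \<noteq> k" "i \<noteq> k"
  proof -
    have "i < j \<and> j < k \<or> i < k \<and> k < j \<or> j < i \<and> i < k \<or> j < k \<and> k < i \<or> k < i \<and> i < j \<or> k < j \<and> j < i"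
      using that by linarith
    then show ?thesis
    proof (elim disjE conjE)
      assume "i < j" "j < k" then show ?thesis using tr[OF S] by simp
    next
      assume "i < k" "k < j"
      have "f i j = op (f i k) (f k j)" using tr[OF S(1) S(3) S(2)] \<open>i < k\<close> \<open>k < j\<close> by simp
      from sw12[OF this S(1) S(3) S(2)] have "f k j = op (f k i) (f i j)" .
      from sw13[OF this S(3) S(1) S(2)] have "f j k = op (f j i) (f i k)" .
      from sw12[OF this S(2) S(1) S(3)] show ?thesis .
    next
      assume "j < i" "i < k"
      have "f j k = op (f j i) (f i k)" using tr[OF S(2) S(1) S(3)] \<open>j < i\<close> \<open>i < k\<close> by simp
      from sw12[OF this S(2) S(1) S(3)] show ?thesis .
    next
      assume "j < k" "k < i"
      have "f j i = op (f j k) (f k i)" using tr[OF S(2) S(3) S(1)] \<open>j < k\<close> \<open>k < i\<close> by simp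
      from sw13[OF this S(2) S(3) S(1)] have "f i j = op (f i k) (f k j)" .
      from sw12[OF this S(1) S(3) S(2)] have "f k j = op (f k i) (f i j)" .
      from sw13[OF this S(3) S(1) S(2)] have "f j k = op (f j i) (f i k)" .
      from sw12[OF this S(2) S(1) S(3)] show ?thesis .
    next
      assume "k < i" "i < j"
      have "f k j = op (f k i) (f i j)" using tr[OF S(3) S(1) S(2)] \<open>k < i\<close> \<open>i < j\<close> by simp
      from sw13[OF this S(3) S(1) S(2)] have "f j k = op (f j i) (f i k)" .
      from sw12[OF this S(2) S(1) S(3)] show ?thesis .
    next
      assume "k < j" "j < i"
      have "f k i = op (f k j) (f j i)" using tr[OF S(3) S(2) S(1)] \<open>k < j\<close> \<open>j < i\<close> by simp
      from sw13[OF this S(3) S(2) S(1)] show ?thesis .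
    qed
  qed
  show ?thesis
  proof (cases "i = j")
    case True then show ?thesis using fe g(6) fG S by simp
  next
    case ij: False
    show ?thesis
    proof (cases "j = k")
      case True then show ?thesis using fe g(5) fG S by simp
    next
      case jk: False
      show ?thesis
      proof (cases "i = k")
        case True then show ?thesis using fe inv1 S by simp
      next
        case False then show ?thesis using P ij jk by simp
      qed
    qed
  qed
qed

lemma opI_eq:
  assumes c: "cont_alo_open_interval G op e"
    and a: "a1 \<in> G" "a2 \<in> G" "a1 \<le> a2" and b: "b1 \<in> G" "b2 \<in> G" "b1 \<le> b2"
  shows "op_I op (a1, a2) (b1, b2) = {op a1 b1 .. op a2 b2}"
proof -
  have ag: "alo_group G op e" and iv: "is_interval G"
    and ct: "continuous_on (G \<times> G) (\<lambda>(x, y). op x y)"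
    using c unfolding cont_alo_open_interval_def by auto
  note g = alo_facts[OF ag]
  have sa: "{a1..a2} \<subseteq> G" using iv a mem_is_interval_1_I by (meson atLeastAtMost_iff subsetI)
  have sb: "{b1..b2} \<subseteq> G" using iv b mem_is_interval_1_I by (meson atLeastAtMost_iff subsetI)
  have eq: "op_I op (a1, a2) (b1, b2) = (\<lambda>(x, y). op x y) ` ({a1..a2} \<times> {b1..b2})"
    unfolding op_I_def by (auto simp: image_iff) (fastforce+)
  have con: "connected ((\<lambda>(x, y). op x y) ` ({a1..a2} \<times> {b1..b2}))"
    apply (rule connected_continuous_image)
    apply (rule continuous_on_subset[OF ct]) using sa sb apply blast
    by (simp add: connected_Times)
  have m1: "op a1 b1 \<in> op_I op (a1, a2) (b1, b2)" unfolding op_I_def using a b by auto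
  have m2: "op a2 b2 \<in> op_I op (a1, a2) (b1, b2)" unfolding op_I_def using a b by auto
  have sub1: "{op a1 b1 .. op a2 b2} \<subseteq> op_I op (a1, a2) (b1, b2)"
    using connected_contains_Icc[OF con[folded eq] m1 m2] .
  have sub2: "op_I op (a1, a2) (b1, b2) \<subseteq> {op a1 b1 .. op a2 b2}"
  proof
    fix z assume "z \<in> op_I op (a1, a2) (b1, b2)"
    then obtain x y where z: "z = op x y" "x \<in> {a1..a2}" "y \<in> {b1..b2}" unfolding op_I_def by auto
    have xG: "x \<in> G" "y \<in> G" using z sa sb by auto
    have "op a1 b1 \<le> op x b1" using g(7) a b xG z by auto
    also have "\<dots> \<le> op x y" using g(8) a b xG z by auto
    finally have l: "op a1 b1 \<le> z" using z by simp
    have "op x y \<le> op a2 y" using g(7) a b xG z by auto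
    also have "\<dots> \<le> op a2 b2" using g(8) a b xG z by auto
    finally have "z \<le> op a2 b2" using z by simp
    then show "z \<in> {op a1 b1 .. op a2 b2}" using l by simp
  qed
  show ?thesis using sub1 sub2 by blast
qed

theorem proposition10:
  fixes G :: "real set" and op :: "real \<Rightarrow> real \<Rightarrow> real" and e :: real
    and n :: nat and A :: "nat \<Rightarrow> nat \<Rightarrow> real \<times> real"
  assumes "cont_alo_open_interval G op e"
    and "IPCM G n A"
    and "G_reciprocal G op e n A"
  shows "(liu_consistent op e n A \<longleftrightarrow>
            (\<forall>i j k. 1 \<le> i \<and> i < j \<and> j < k \<and> k \<le> n \<longrightarrow>
               Lmat e A i k = op (Lmat e A i j) (Lmat e A j k) \<and>
               Rmat e A i k = op (Rmat e A i j) (Rmat e A j k)))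
       \<and> (liu_consistent op e n A \<longleftrightarrow>
            (\<forall>i j k. 1 \<le> i \<and> i < j \<and> j < k \<and> k \<le> n \<longrightarrow>
               {fst (A i k)..snd (A i k)} = op_I op (A i j) (A j k)))"
proof -
  have ag: "alo_group G op e" using assms(1) unfolding cont_alo_open_interval_def by auto
  note g = alo_facts[OF ag]
  let ?S = "{1..n}"
  have AG: "fst (A i j) \<in> G \<and> snd (A i j) \<in> G \<and> fst (A i j) \<le> snd (A i j)" if "i \<in> ?S" "j \<in> ?S" for i j
    using assms(2) that unfolding IPCM_def in_IG_def by blast
  have rec: "A j i = (ginv G op e (snd (A i j)), ginv G op e (fst (A i j)))" if "i \<in> ?S" "j \<in> ?S" for i j
    using assms(3) that unfolding G_reciprocal_def ginv_I_def by blast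
  have ge: "ginv G op e e = e" using ginv_unique[OF ag g(4) g(4)] g(5)[OF g(4)] by simp
  have gg: "ginv G op e (ginv G op e a) = a" if "a \<in> G" for a
  proof -
    have h: "ginv G op e a \<in> G" "op a (ginv G op e a) = e" using ginv_facts[OF ag that] by auto
    have "op (ginv G op e a) a = e" using h g(3)[OF h(1) that] by simp
    then show ?thesis using ginv_unique[OF ag h(1) that] by simp
  qed
  have LG: "Lmat e A i j \<in> G" if "i \<in> ?S" "j \<in> ?S" for i j
    using AG[OF that] g(4) unfolding Lmat_def by auto
  have RG: "Rmat e A i j \<in> G" if "i \<in> ?S" "j \<in> ?S" for i j
    using AG[OF that] g(4) unfolding Rmat_def by auto
  have Linv: "Lmat e A j i = ginv G op e (Lmat e A i j)" if "i \<in> ?S" "j \<in> ?S" for i j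
  proof -
    consider "i < j" | "i = j" | "j < i" by linarith
    then show ?thesis
    proof cases
      case 1 then show ?thesis using rec[OF that] unfolding Lmat_def by simp
    next
      case 2 then show ?thesis using ge unfolding Lmat_def by simp
    next
      case 3 then show ?thesis using rec[OF that(2,1)] gg AG[OF that(2,1)] unfolding Lmat_def by simp
    qed
  qed
  have Rinv: "Rmat e A j i = ginv G op e (Rmat e A i j)" if "i \<in> ?S" "j \<in> ?S" for i j
  proof -
    consider "i < j" | "i = j" | "j < i" by linarith
    then show ?thesis
    proof cases
      case 1 then show ?thesis using rec[OF that] unfolding Rmat_def by simp
    next
      case 2 then show ?thesis using ge unfolding Rmat_def by simp
    next
      case 3 then show ?thesis using rec[OF that(2,1)] gg AG[OF that(2,1)] unfolding Rmat_def by simp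
    qed
  qed
  have eq1: "liu_consistent op e n A \<longleftrightarrow>
            (\<forall>i j k. 1 \<le> i \<and> i < j \<and> j < k \<and> k \<le> n \<longrightarrow>
               Lmat e A i k = op (Lmat e A i j) (Lmat e A j k) \<and>
               Rmat e A i k = op (Rmat e A i j) (Rmat e A j k))" (is "_ \<longleftrightarrow> ?T")
  proof
    assume "liu_consistent op e n A"
    then show ?T unfolding liu_consistent_def by simp
  next
    assume T: ?T
    have trL: "Lmat e A i k = op (Lmat e A i j) (Lmat e A j k)"
      if "i \<in> ?S" "j \<in> ?S" "k \<in> ?S" "i < j" "j < k" for i j k using T that by auto
    have trR: "Rmat e A i k = op (Rmat e A i j) (Rmat e A j k)"
      if "i \<in> ?S" "j \<in> ?S" "k \<in> ?S" "i < j" "j < k" for i j k using T that by auto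
    show "liu_consistent op e n A" unfolding liu_consistent_def
    proof (intro ballI conjI)
      fix i j k assume S: "i \<in> ?S" "j \<in> ?S" "k \<in> ?S"
      show "Lmat e A i k = op (Lmat e A i j) (Lmat e A j k)"
        by (rule trans_ext[OF ag LG _ Linv trL S]) (simp add: Lmat_def)+
      show "Rmat e A i k = op (Rmat e A i j) (Rmat e A j k)"
        by (rule trans_ext[OF ag RG _ Rinv trR S]) (simp add: Rmat_def)+
    qed
  qed
  have eq2: "{fst (A i k)..snd (A i k)} = op_I op (A i j) (A j k) \<longleftrightarrow>
      Lmat e A i k = op (Lmat e A i j) (Lmat e A j k) \<and>
      Rmat e A i k = op (Rmat e A i j) (Rmat e A j k)"
    if "1 \<le> i" "i < j" "j < k" "k \<le> n" for i j k
  proof -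
    have S: "i \<in> ?S" "j \<in> ?S" "k \<in> ?S" using that by auto
    have h: "fst (A i j) \<in> G" "snd (A i j) \<in> G" "fst (A i j) \<le> snd (A i j)"
        "fst (A j k) \<in> G" "snd (A j k) \<in> G" "fst (A j k) \<le> snd (A j k)"
        "fst (A i k) \<le> snd (A i k)"
      using AG[OF S(1,2)] AG[OF S(2,3)] AG[OF S(1,3)] by auto
    have o0: "op_I op (fst (A i j), snd (A i j)) (fst (A j k), snd (A j k)) = {op (fst (A i j)) (fst (A j k)) .. op (snd (A i j)) (snd (A j k))}"
      by (rule opI_eq[OF assms(1) h(1-6)])
    have o: "op_I op (A i j) (A j k) = {op (fst (A i j)) (fst (A j k)) .. op (snd (A i j)) (snd (A j k))}"
      using o0 by simp
    have le: "op (fst (A i j)) (fst (A j k)) \<le> op (snd (A i j)) (snd (A j k))"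
    proof -
      have "op (fst (A i j)) (fst (A j k)) \<le> op (snd (A i j)) (fst (A j k))"
        using g(7)[OF h(1) h(2) h(4) h(3)] .
      also have "\<dots> \<le> op (snd (A i j)) (snd (A j k))"
        using g(8)[OF h(4) h(5) h(2) h(6)] .
      finally show ?thesis .
    qed
    have L: "Lmat e A i k = fst (A i k)" "Lmat e A i j = fst (A i j)" "Lmat e A j k = fst (A j k)"
      "Rmat e A i k = snd (A i k)" "Rmat e A i j = snd (A i j)" "Rmat e A j k = snd (A j k)"
      using that unfolding Lmat_def Rmat_def by auto
    have "{fst (A i k)..snd (A i k)} = {op (fst (A i j)) (fst (A j k)) .. op (snd (A i j)) (snd (A j k))}
      \<longleftrightarrow> fst (A i k) = op (fst (A i j)) (fst (A j k)) \<and> snd (A i k) = op (snd (A i j)) (snd (A j k))"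
      using Icc_eq_Icc h(7) le by (metis not_le)
    then show ?thesis unfolding o L .
  qed
  have eq3: "(\<forall>i j k. 1 \<le> i \<and> i < j \<and> j < k \<and> k \<le> n \<longrightarrow>
               Lmat e A i k = op (Lmat e A i j) (Lmat e A j k) \<and>
               Rmat e A i k = op (Rmat e A i j) (Rmat e A j k))
     \<longleftrightarrow> (\<forall>i j k. 1 \<le> i \<and> i < j \<and> j < k \<and> k \<le> n \<longrightarrow>
               {fst (A i k)..snd (A i k)} = op_I op (A i j) (A j k))"
  proof (intro iffI allI impI)
    fix i j k assume T: "\<forall>i j k. 1 \<le> i \<and> i < j \<and> j < k \<and> k \<le> n \<longrightarrow>
               Lmat e A i k = op (Lmat e A i j) (Lmat e A j k) \<and>
               Rmat e A i k = op (Rmat e A i j) (Rmat e A j k)"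
      and c: "1 \<le> i \<and> i < j \<and> j < k \<and> k \<le> n"
    have "Lmat e A i k = op (Lmat e A i j) (Lmat e A j k) \<and>
               Rmat e A i k = op (Rmat e A i j) (Rmat e A j k)" using T c by blast
    then show "{fst (A i k)..snd (A i k)} = op_I op (A i j) (A j k)"
      using eq2[of i j k] c by simp
  next
    fix i j k assume T: "\<forall>i j k. 1 \<le> i \<and> i < j \<and> j < k \<and> k \<le> n \<longrightarrow>
               {fst (A i k)..snd (A i k)} = op_I op (A i j) (A j k)"
      and c: "1 \<le> i \<and> i < j \<and> j < k \<and> k \<le> n"
    have "{fst (A i k)..snd (A i k)} = op_I op (A i j) (A j k)" using T c by blast
    then show "Lmat e A i k = op (Lmat e A i j) (Lmat e A j k) \<and>
               Rmat e A i k = op (Rmat e A i j) (Rmat e A j k)"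
      using eq2[of i j k] c by simp
  qed
  show ?thesis using eq1 eq3 by simp
qed

end
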